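(* Let $p,q$ be coprime integers with $q>0$ and let $G(p,q)=\langle a,b\mid a^2ba^2b^2a^{-1}b^2,\ m^pl^q\rangle$, where $m=a^{-1}b^{-2}$ and $l=ab^{-1}a^2m^{-18}$. Let $k\in G(p,q)$ be an element with $m=k^q$ and $l=k^{-p}$. Suppose $G(p,q)$ acts on the right on $\mathbb{R}$ by orientation-preserving homeomorphisms, $x\mapsto xg$. If $xk>x$ for all $x\in\mathbb{R}$, then $x>xb$ for all $x\in\mathbb{R}$.
   Context: $G(p,q)$ is the fundamental group of $p/q$-Dehn surgery on the $(-2,3,7)$-pretzel knot, with $m$, $l$ the meridian and longitude. *)

theory Defs
  imports "HOL-Analysis.Analysis"
begin

datatype gen = GA | GB

text \<open>A letter is a generator together with an exponent sign flag (True = inverse).\<close>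
type_synonym letter = "gen \<times> bool"
type_synonym word = "letter list"

definition winv :: "word \<Rightarrow> word" where
  "winv w = rev (map (\<lambda>(g, e). (g, \<not> e)) w)"

definition wpow :: "word \<Rightarrow> int \<Rightarrow> word" where
  "wpow w n = (if 0 \<le> n then concat (replicate (nat n) w)
               else concat (replicate (nat (- n)) (winv w)))"

abbreviation wa :: word where "wa \<equiv> [(GA, False)]"
abbreviation wb :: word where "wb \<equiv> [(GB, False)]"

definition mer :: word where
  "mer = winv wa @ wpow wb (-2)"

definition lon :: word where
  "lon = wa @ winv wb @ wpow wa 2 @ wpow mer (-18)"

definition rel1 :: word where
  "rel1 = wpow wa 2 @ wb @ wpow wa 2 @ wpow wb 2 @ winv wa @ wpow wb 2"

definition rel2 :: "int \<Rightarrow> int \<Rightarrow> word" where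
  "rel2 p q = wpow mer p @ wpow lon q"

text \<open>Equality of words in the group presented by generators a, b and relators R:
  the congruence on words generated by free cancellation and by the relators.\<close>
inductive geq :: "word set \<Rightarrow> word \<Rightarrow> word \<Rightarrow> bool" for R where
  geq_refl: "geq R u u"
| geq_sym: "geq R u v \<Longrightarrow> geq R v u"
| geq_trans: "geq R u v \<Longrightarrow> geq R v w \<Longrightarrow> geq R u w"
| geq_cong: "geq R u v \<Longrightarrow> geq R (x @ u @ y) (x @ v @ y)"
| geq_cancel: "geq R [(g, e), (g, \<not> e)] []"
| geq_rel: "r \<in> R \<Longrightarrow> geq R r []"

definition Geq :: "int \<Rightarrow> int \<Rightarrow> word \<Rightarrow> word \<Rightarrow> bool" where
  "Geq p q u v = geq {rel1, rel2 p q} u v"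

definition orient_pres_homeo :: "(real \<Rightarrow> real) \<Rightarrow> bool" where
  "orient_pres_homeo f \<longleftrightarrow> (\<exists>g. homeomorphism UNIV UNIV f g) \<and> mono f"

text \<open>Right action x \<mapsto> x w of a word, given the homeomorphisms x \<mapsto> x a = fa x and
  x \<mapsto> x b = fb x; so x (g h) = (x g) h.\<close>
fun lact :: "(real \<Rightarrow> real) \<Rightarrow> (real \<Rightarrow> real) \<Rightarrow> letter \<Rightarrow> real \<Rightarrow> real" where
  "lact fa fb (GA, False) x = fa x"
| "lact fa fb (GA, True) x = inv fa x"
| "lact fa fb (GB, False) x = fb x"
| "lact fa fb (GB, True) x = inv fb x"

fun wact :: "(real \<Rightarrow> real) \<Rightarrow> (real \<Rightarrow> real) \<Rightarrow> real \<Rightarrow> word \<Rightarrow> real" where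
  "wact fa fb x [] = x"
| "wact fa fb x (c # w) = wact fa fb (lact fa fb c x) w"

text \<open>A right action of G(p,q) on R by orientation-preserving homeomorphisms is
  determined by the actions of a and b, which must be orientation-preserving
  homeomorphisms under which both relators act trivially.\<close>
definition G_right_action :: "int \<Rightarrow> int \<Rightarrow> (real \<Rightarrow> real) \<Rightarrow> (real \<Rightarrow> real) \<Rightarrow> bool" where
  "G_right_action p q fa fb \<longleftrightarrow>
     orient_pres_homeo fa \<and> orient_pres_homeo fb \<and>
     (\<forall>x. wact fa fb x rel1 = x) \<and> (\<forall>x. wact fa fb x (rel2 p q) = x)"

end

theory Submission
  imports Defs
begin

lemma wact_append: "wact fa fb x (u @ v) = wact fa fb (wact fa fb x u) v"
  by (induction u arbitrary: x) auto

lemma geq_sound: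
  assumes "geq R u v"
    and "\<And>r x. r \<in> R \<Longrightarrow> wact fa fb x r = x"
    and "\<And>x. fa (inv fa x) = x" "\<And>x. inv fa (fa x) = x"
    and "\<And>x. fb (inv fb x) = x" "\<And>x. inv fb (fb x) = x"
  shows "wact fa fb x u = wact fa fb x v"
  using assms(1)
proof (induction arbitrary: x rule: geq.induct)
  case (geq_cong u v x' y)
  then show ?case by (simp add: wact_append)
next
  case (geq_cancel g e)
  then show ?case using assms(3-6) by (cases g; cases e) auto
next
  case (geq_rel r)
  then show ?case using assms(2) by simp
qed auto

lemma homeo_facts:
  assumes "orient_pres_homeo f"
  shows "\<And>x. f (inv f x) = x" "\<And>x. inv f (f x) = x" "mono f"
    "\<And>x y. x < y \<Longrightarrow> f x < f y"
proof -
  obtain g where h: "homeomorphism UNIV UNIV f g" and m: "mono f"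
    using assms unfolding orient_pres_homeo_def by blast
  have i1: "\<And>x. g (f x) = x" and i2: "\<And>y. f (g y) = y"
    using h unfolding homeomorphism_def by auto
  have inj: "inj f" by (metis i1 injI)
  have sj: "surj f" by (metis i2 surjI)
  show "\<And>x. f (inv f x) = x" using sj by (simp add: surj_f_inv_f)
  show "\<And>x. inv f (f x) = x" using inj by simp
  show "mono f" by (rule m)
  show "\<And>x y. x < y \<Longrightarrow> f x < f y"
    using m inj by (metis monoD order_less_le injD)
qed

lemma pow_pos:
  assumes "\<forall>x. wact fa fb x k > x" and "n > 0"
  shows "wact fa fb x (concat (replicate n k)) > x"
  using assms(2)
proof (induction n arbitrary: x)
  case 0 then show ?case by simp
next
  case (Suc n)
  show ?case
  proof (cases "n = 0")
    case True then show ?thesis using assms(1) by simp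
  next
    case False
    then have "wact fa fb (wact fa fb x k) (concat (replicate n k)) > wact fa fb x k"
      using Suc.IH by simp
    then show ?thesis using assms(1) by (simp add: wact_append) (meson less_trans)
  qed
qed

theorem mainTheorem8:
  fixes p q :: int and k :: word and fa fb :: "real \<Rightarrow> real"
  assumes "coprime p q" and "q > 0"
    and "Geq p q mer (wpow k q)"
    and "Geq p q lon (wpow k (- p))"
    and "G_right_action p q fa fb"
    and "\<forall>x. wact fa fb x k > x"
  shows "\<forall>x. x > wact fa fb x wb"
proof
  fix x0 :: real
  define A where "A = fa"
  define Ai where "Ai = inv fa"
  define B where "B = fb"
  define Bi where "Bi = inv fb"
  have ha: "orient_pres_homeo fa" and hb: "orient_pres_homeo fb"
    and r1: "\<forall>x. wact fa fb x rel1 = x" and r2: "\<forall>x. wact fa fb x (rel2 p q) = x"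
    using assms(5) unfolding G_right_action_def by auto
  note HA = homeo_facts[OF ha] and HB = homeo_facts[OF hb]
  have AAi: "\<And>x. A (Ai x) = x" and AiA: "\<And>x. Ai (A x) = x"
    using HA unfolding A_def Ai_def by auto
  have BBi: "\<And>x. B (Bi x) = x" and BiB: "\<And>x. Bi (B x) = x"
    using HB unfolding B_def Bi_def by auto
  have Amono: "\<And>x y. x \<le> y \<Longrightarrow> A x \<le> A y" using HA(3) unfolding A_def mono_def by auto
  have Astr: "\<And>x y. x < y \<Longrightarrow> A x < A y" using HA(4) unfolding A_def by auto
  have Bmono: "\<And>x y. x \<le> y \<Longrightarrow> B x \<le> B y" using HB(3) unfolding B_def mono_def by auto
  have sound: "\<And>u v x. Geq p q u v \<Longrightarrow> wact fa fb x u = wact fa fb x v"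
    unfolding Geq_def
    by (rule geq_sound) (use r1 r2 HA HB in auto)
  have merx: "\<And>x. wact fa fb x mer = Bi (Bi (Ai x))"
    by (simp add: mer_def winv_def wpow_def numeral_2_eq_2 Ai_def Bi_def)
  have rel1x: "\<And>x. wact fa fb x rel1 = B (B (Ai (B (B (A (A (B (A (A x)))))))))"
    by (simp add: rel1_def winv_def wpow_def numeral_2_eq_2 A_def Ai_def B_def)
  have mpos: "\<And>x. Bi (Bi (Ai x)) > x"
  proof -
    fix x
    have "wact fa fb x (wpow k q) > x"
      unfolding wpow_def using assms(2) pow_pos[OF assms(6)] by simp
    then show "Bi (Bi (Ai x)) > x" using sound[OF assms(3)] merx by metis
  qed
  have R: "\<And>x. B (B (Ai (B (B (A (A (B (A (A x))))))))) = x" using r1 rel1x by metis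
  have R': "\<And>x. A (A (B (A (A x)))) = Bi (Bi (A (Bi (Bi x))))"
  proof -
    fix x
    have "Bi (Bi (B (B (Ai (B (B (A (A (B (A (A x))))))))))) = Bi (Bi x)" using R by simp
    then have "Ai (B (B (A (A (B (A (A x))))))) = Bi (Bi x)" by (simp add: BiB)
    then have "A (Ai (B (B (A (A (B (A (A x)))))))) = A (Bi (Bi x))" by simp
    then have "B (B (A (A (B (A (A x)))))) = A (Bi (Bi x))" by (simp add: AAi)
    then have "Bi (Bi (B (B (A (A (B (A (A x)))))))) = Bi (Bi (A (Bi (Bi x))))" by simp
    then show "A (A (B (A (A x)))) = Bi (Bi (A (Bi (Bi x))))" by (simp add: BiB)
  qed
  have S4: "\<And>y. Bi (Bi (Ai (A (A (Bi (Bi (Ai y))))))) = A (A (B (A y)))"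
    using R' AiA AAi by metis
  have S1: "A (B (B x0)) < x0"
    using mpos[of "A (B (B x0))"] by (simp add: AiA BiB)
  have S2: "A (A (B (B x0))) < A x0" using Astr[OF S1] .
  have S3: "A (A (Ai x0)) < Bi (Bi (Ai (A (A (Bi (Bi (Ai (Ai x0))))))))"
  proof -
    have "A (A (Ai x0)) < A (A (Bi (Bi (Ai (Ai x0)))))"
      using Astr Astr mpos by blast
    also have "\<dots> < Bi (Bi (Ai (A (A (Bi (Bi (Ai (Ai x0))))))))" using mpos by blast
    finally show ?thesis .
  qed
  have "A x0 < A (A (B x0))" using S3 S4[of "Ai x0"] by (simp add: AAi)
  with S2 have "A (A (B (B x0))) < A (A (B x0))" by linarith
  then have "B (B x0) < B x0" using Amono by (meson not_le)
  then have "B x0 < x0" using Bmono by (meson not_le)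
  then show "x0 > wact fa fb x0 wb" by (simp add: B_def)
qed

end
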